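(* Let $G$ be a graph whose $\operatorname{IR}$-graph $H=G(\operatorname{IR})$ is connected, and let $X$ be an $\operatorname{IR}(G)$-set such that either (i) the induced subgraph $G[X]$ has exactly one edge, or (ii) $X$ is independent and at least two vertices of $X$ have $X$-external private neighbours. Then $X$ lies on an induced $4$-cycle of $H$.
   Context: All graphs are finite and simple. For $G=(V,E)$, $D\subseteq V$, $v\in D$: $\operatorname{PN}(v,D)=N[v]-N[D-\{v\}]$ and $\operatorname{EPN}(v,D)=\operatorname{PN}(v,D)-D$; elements of $\operatorname{EPN}(v,D)$ are the $D$-external private neighbours of $v$. $D$ is irredundant if $\operatorname{PN}(v,D)\neq\varnothing$ for all $v\in D$; $\operatorname{IR}(G)$ is the maximum size of an irredundant set; an $\operatorname{IR}(G)$-set is an irredundant set of that size. $G(\operatorname{IR})$ has the $\operatorname{IR}(G)$-sets as vertices, with $D\sim D'$ iff there exist $u\in D$, $v\in D'$ with $uv\in E(G)$ and $D'=(D-\{u\})\cup\{v\}$. *)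

theory Defs
  imports Main
begin

definition simple_graph :: "'a set \<Rightarrow> ('a \<Rightarrow> 'a \<Rightarrow> bool) \<Rightarrow> bool" where
  "simple_graph V E \<longleftrightarrow> finite V \<and> (\<forall>u v. E u v \<longrightarrow> u \<in> V \<and> v \<in> V)
     \<and> (\<forall>u v. E u v \<longrightarrow> E v u) \<and> (\<forall>v. \<not> E v v)"

definition cnbhd :: "'a set \<Rightarrow> ('a \<Rightarrow> 'a \<Rightarrow> bool) \<Rightarrow> 'a \<Rightarrow> 'a set" where
  "cnbhd V E v = insert v {u \<in> V. E v u}"

definition cnbhd_set :: "'a set \<Rightarrow> ('a \<Rightarrow> 'a \<Rightarrow> bool) \<Rightarrow> 'a set \<Rightarrow> 'a set" where
  "cnbhd_set V E S = (\<Union>v\<in>S. cnbhd V E v)"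

definition PN :: "'a set \<Rightarrow> ('a \<Rightarrow> 'a \<Rightarrow> bool) \<Rightarrow> 'a \<Rightarrow> 'a set \<Rightarrow> 'a set" where
  "PN V E v D = cnbhd V E v - cnbhd_set V E (D - {v})"

definition EPN :: "'a set \<Rightarrow> ('a \<Rightarrow> 'a \<Rightarrow> bool) \<Rightarrow> 'a \<Rightarrow> 'a set \<Rightarrow> 'a set" where
  "EPN V E v D = PN V E v D - D"

definition irredundant :: "'a set \<Rightarrow> ('a \<Rightarrow> 'a \<Rightarrow> bool) \<Rightarrow> 'a set \<Rightarrow> bool" where
  "irredundant V E D \<longleftrightarrow> D \<subseteq> V \<and> (\<forall>v\<in>D. PN V E v D \<noteq> {})"

definition IR :: "'a set \<Rightarrow> ('a \<Rightarrow> 'a \<Rightarrow> bool) \<Rightarrow> nat" where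
  "IR V E = Max (card ` {D. irredundant V E D})"

definition IR_set :: "'a set \<Rightarrow> ('a \<Rightarrow> 'a \<Rightarrow> bool) \<Rightarrow> 'a set \<Rightarrow> bool" where
  "IR_set V E D \<longleftrightarrow> irredundant V E D \<and> card D = IR V E"

definition IR_adj :: "'a set \<Rightarrow> ('a \<Rightarrow> 'a \<Rightarrow> bool) \<Rightarrow> 'a set \<Rightarrow> 'a set \<Rightarrow> bool" where
  "IR_adj V E D D' \<longleftrightarrow> IR_set V E D \<and> IR_set V E D' \<and>
     (\<exists>u\<in>D. \<exists>v\<in>D'. E u v \<and> D' = (D - {u}) \<union> {v})"

definition IR_graph_connected :: "'a set \<Rightarrow> ('a \<Rightarrow> 'a \<Rightarrow> bool) \<Rightarrow> bool" where
  "IR_graph_connected V E \<longleftrightarrow>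
     (\<forall>D D'. IR_set V E D \<longrightarrow> IR_set V E D' \<longrightarrow> (IR_adj V E)\<^sup>*\<^sup>* D D')"

definition on_induced_C4_IR :: "'a set \<Rightarrow> ('a \<Rightarrow> 'a \<Rightarrow> bool) \<Rightarrow> 'a set \<Rightarrow> bool" where
  "on_induced_C4_IR V E X \<longleftrightarrow> (\<exists>A B C. distinct [X, A, B, C] \<and>
     IR_adj V E X A \<and> IR_adj V E A B \<and> IR_adj V E B C \<and> IR_adj V E C X \<and>
     \<not> IR_adj V E X B \<and> \<not> IR_adj V E A C)"

definition induced_edges :: "('a \<Rightarrow> 'a \<Rightarrow> bool) \<Rightarrow> 'a set \<Rightarrow> 'a set set" where
  "induced_edges E X = {{u, v} | u v. u \<in> X \<and> v \<in> X \<and> E u v}"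

definition independent :: "('a \<Rightarrow> 'a \<Rightarrow> bool) \<Rightarrow> 'a set \<Rightarrow> bool" where
  "independent E X \<longleftrightarrow> (\<forall>u\<in>X. \<forall>v\<in>X. \<not> E u v)"

end

theory Submission
  imports Defs
begin

lemma pn_mem:
  "p \<in> PN V E w S \<longleftrightarrow> (p = w \<or> (p \<in> V \<and> E w p)) \<and> (\<forall>z\<in>S. z \<noteq> w \<longrightarrow> p \<noteq> z \<and> \<not> (p \<in> V \<and> E z p))"
  unfolding PN_def cnbhd_set_def cnbhd_def by blast

lemma irr_intro:
  assumes "S \<subseteq> V"
    and "\<And>w. w \<in> S \<Longrightarrow> \<exists>p. (p = w \<or> (p \<in> V \<and> E w p)) \<and>
            (\<forall>z\<in>S. z \<noteq> w \<longrightarrow> p \<noteq> z \<and> \<not> (p \<in> V \<and> E z p))"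
  shows "irredundant V E S"
  unfolding irredundant_def
proof (intro conjI ballI assms(1))
  fix w assume "w \<in> S"
  from assms(2)[OF this] obtain p where "p \<in> PN V E w S" unfolding pn_mem by blast
  then show "PN V E w S \<noteq> {}" by (metis empty_iff)
qed

lemma epn_facts:
  assumes "simple_graph V E" "u' \<in> EPN V E u X" "u \<in> X"
  shows "u' \<notin> X" "u' \<in> V" "E u u'" "E u' u" "\<And>z. z \<in> X \<Longrightarrow> z \<noteq> u \<Longrightarrow> u' \<noteq> z \<and> \<not> E z u' \<and> \<not> E u' z"
proof -
  have s: "\<And>a b. E a b \<Longrightarrow> E b a" "\<And>a. \<not> E a a" using assms(1) unfolding simple_graph_def by auto
  have a: "u' \<notin> X" "u' \<in> PN V E u X" using assms(2) unfolding EPN_def by auto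
  then have b: "(u' = u \<or> (u' \<in> V \<and> E u u'))" "\<forall>z\<in>X. z \<noteq> u \<longrightarrow> u' \<noteq> z \<and> \<not> (u' \<in> V \<and> E z u')"
    unfolding pn_mem by auto
  have c: "u' \<noteq> u" using a(1) assms(3) by auto
  show "u' \<notin> X" by (fact a(1))
  show "u' \<in> V" "E u u'" using b(1) c by auto
  then show "E u' u" using s by auto
  show "\<And>z. z \<in> X \<Longrightarrow> z \<noteq> u \<Longrightarrow> u' \<noteq> z \<and> \<not> E z u' \<and> \<not> E u' z"
    using b(2) \<open>u' \<in> V\<close> s by blast
qed

lemma pn_in_X_empty:
  assumes "simple_graph V E" "x \<in> X" "y \<in> X" "E x y"
  shows "PN V E x X \<inter> X = {}"
proof (rule ccontr)
  assume "PN V E x X \<inter> X \<noteq> {}"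
  then obtain p where p: "p \<in> X" "p \<in> PN V E x X" by blast
  have s: "\<And>a b. E a b \<Longrightarrow> E b a" "\<And>a. \<not> E a a" "\<And>a b. E a b \<Longrightarrow> a \<in> V \<and> b \<in> V"
    using assms(1) unfolding simple_graph_def by auto
  from p(2) have q: "(p = x \<or> (p \<in> V \<and> E x p))" "\<forall>z\<in>X. z \<noteq> x \<longrightarrow> p \<noteq> z \<and> \<not> (p \<in> V \<and> E z p)"
    unfolding pn_mem by auto
  show False
  proof (cases "p = x")
    case True
    then show False using q(2) assms(3,4) s by metis
  next
    case False
    then show False using q p(1) by blast
  qed
qed

lemma adjI:
  assumes "IR_set V E D" "IR_set V E D'" "a \<in> D" "b \<in> D'" "E a b" "D' = (D - {a}) \<union> {b}"
  shows "IR_adj V E D D'"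
  unfolding IR_adj_def using assms by blast

lemma main:
  assumes sg: "simple_graph V E" and XI: "IR_set V E X"
    and uX: "u \<in> X" and vX: "v \<in> X" and uv: "u \<noteq> v"
    and u': "u' \<in> EPN V E u X" and v': "v' \<in> EPN V E v X"
    and hyp: "\<And>w z. w \<in> X \<Longrightarrow> z \<in> X \<Longrightarrow> E w z \<Longrightarrow> (w = u \<and> z = v) \<or> (w = v \<and> z = u)"
  shows "on_induced_C4_IR V E X"
proof -
  note U = epn_facts[OF sg u' uX]
  note W = epn_facts[OF sg v' vX]
  have sym: "\<And>a b. E a b \<Longrightarrow> E b a" and irr: "\<And>a. \<not> E a a"
    using sg unfolding simple_graph_def by auto
  have fin: "finite X" and XV: "X \<subseteq> V"
    using XI sg unfolding IR_set_def irredundant_def simple_graph_def by (auto intro: finite_subset)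
  have uv': "u' \<noteq> v'" using U(5)[OF vX uv[symmetric]] W(3) by auto
  have c0: "card X > 0" using fin uX card_gt_0_iff by blast
  have u'v: "u' \<noteq> v" using U(5)[OF vX uv[symmetric]] by blast
  have v'u: "v' \<noteq> u" using W(5)[OF uX uv] by blast
  define A where "A = (X - {u}) \<union> {u'}"
  define B where "B = (A - {v}) \<union> {v'}"
  define C where "C = (X - {v}) \<union> {v'}"
  have C_eq: "C = (B - {u'}) \<union> {u}"
    unfolding A_def B_def C_def using uX vX uv uv' U(1) W(1) by auto
  have X_eq: "X = (C - {v'}) \<union> {v}"
    unfolding C_def using vX W(1) by auto
  have cA: "card A = card X" unfolding A_def using fin uX U(1)
    using c0 by (simp add: card_Diff_singleton)
  have cB: "card B = card X" unfolding B_def A_def using fin uX vX uv uv' U(1) W(1)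
    using c0 by (simp add: card_Diff_singleton)
  have cC: "card C = card X" unfolding C_def using fin vX W(1)
    using c0 by (simp add: card_Diff_singleton)
  have iA: "irredundant V E A"
  proof (rule irr_intro)
    show "A \<subseteq> V" unfolding A_def using XV U(2) by auto
  next
    fix w assume "w \<in> A"
    then consider "w = u'" | "w \<in> X" "w \<noteq> u" unfolding A_def by auto
    then show "\<exists>p. (p = w \<or> (p \<in> V \<and> E w p)) \<and>
            (\<forall>z\<in>A. z \<noteq> w \<longrightarrow> p \<noteq> z \<and> \<not> (p \<in> V \<and> E z p))"
    proof cases
      case 1 then show ?thesis unfolding A_def using U(5) by auto
    next
      case 2
      have "\<forall>z\<in>A. z \<noteq> w \<longrightarrow> w \<noteq> z \<and> \<not> (w \<in> V \<and> E z w)"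
      proof (intro ballI impI)
        fix z assume z: "z \<in> A" "z \<noteq> w"
        then have "z = u' \<or> (z \<in> X \<and> z \<noteq> u)" unfolding A_def by auto
        then show "w \<noteq> z \<and> \<not> (w \<in> V \<and> E z w)" using U(5)[OF 2] hyp[of z w] 2 z(2) by auto
      qed
      then show ?thesis by blast
    qed
  qed
  have iC: "irredundant V E C"
  proof (rule irr_intro)
    show "C \<subseteq> V" unfolding C_def using XV W(2) by auto
  next
    fix w assume "w \<in> C"
    then consider "w = v'" | "w \<in> X" "w \<noteq> v" unfolding C_def by auto
    then show "\<exists>p. (p = w \<or> (p \<in> V \<and> E w p)) \<and>
            (\<forall>z\<in>C. z \<noteq> w \<longrightarrow> p \<noteq> z \<and> \<not> (p \<in> V \<and> E z p))"
    proof cases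
      case 1 then show ?thesis unfolding C_def using W(5) by auto
    next
      case 2
      have "\<forall>z\<in>C. z \<noteq> w \<longrightarrow> w \<noteq> z \<and> \<not> (w \<in> V \<and> E z w)"
      proof (intro ballI impI)
        fix z assume z: "z \<in> C" "z \<noteq> w"
        then have "z = v' \<or> (z \<in> X \<and> z \<noteq> v)" unfolding C_def by auto
        then show "w \<noteq> z \<and> \<not> (w \<in> V \<and> E z w)" using W(5)[OF 2] hyp[of z w] 2 z(2) by auto
      qed
      then show ?thesis by blast
    qed
  qed
  have iB: "irredundant V E B"
  proof (rule irr_intro)
    show "B \<subseteq> V" unfolding B_def A_def using XV U(2) W(2) by auto
  next
    fix w assume "w \<in> B"
    then consider "w = u'" | "w = v'" | "w \<in> X" "w \<noteq> u" "w \<noteq> v"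
      unfolding B_def A_def using uv' by auto
    then show "\<exists>p. (p = w \<or> (p \<in> V \<and> E w p)) \<and>
            (\<forall>z\<in>B. z \<noteq> w \<longrightarrow> p \<noteq> z \<and> \<not> (p \<in> V \<and> E z p))"
    proof cases
      case 1
      have "(u = w \<or> (u \<in> V \<and> E w u)) \<and> (\<forall>z\<in>B. z \<noteq> w \<longrightarrow> u \<noteq> z \<and> \<not> (u \<in> V \<and> E z u))"
      proof (intro conjI ballI impI)
        show "u = w \<or> (u \<in> V \<and> E w u)" using 1 U(4) uX XV by auto
      next
        fix z assume z: "z \<in> B" "z \<noteq> w"
        then have "z = v' \<or> (z \<in> X \<and> z \<noteq> u \<and> z \<noteq> v)" unfolding B_def A_def using 1 by auto
        then show "u \<noteq> z" "\<not> (u \<in> V \<and> E z u)"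
          using W(5)[OF uX uv] hyp[of z u] uX U(1) W(1) by auto
      qed
      then show ?thesis by blast
    next
      case 2
      have "(v = w \<or> (v \<in> V \<and> E w v)) \<and> (\<forall>z\<in>B. z \<noteq> w \<longrightarrow> v \<noteq> z \<and> \<not> (v \<in> V \<and> E z v))"
      proof (intro conjI ballI impI)
        show "v = w \<or> (v \<in> V \<and> E w v)" using 2 W(4) vX XV by auto
      next
        fix z assume z: "z \<in> B" "z \<noteq> w"
        then have "z = u' \<or> (z \<in> X \<and> z \<noteq> u \<and> z \<noteq> v)" unfolding B_def A_def using 2 by auto
        then show "v \<noteq> z" "\<not> (v \<in> V \<and> E z v)"
          using U(5)[OF vX uv[symmetric]] hyp[of z v] vX U(1) W(1) by auto
      qed
      then show ?thesis by blast
    next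
      case 3
      have "\<forall>z\<in>B. z \<noteq> w \<longrightarrow> w \<noteq> z \<and> \<not> (w \<in> V \<and> E z w)"
      proof (intro ballI impI)
        fix z assume z: "z \<in> B" "z \<noteq> w"
        then have "z = u' \<or> z = v' \<or> (z \<in> X \<and> z \<noteq> u \<and> z \<noteq> v)" unfolding B_def A_def by auto
        then show "w \<noteq> z \<and> \<not> (w \<in> V \<and> E z w)"
          using U(5)[OF 3(1,2)] W(5)[OF 3(1,3)] hyp[of z w] 3 z(2) by auto
      qed
      then show ?thesis by blast
    qed
  qed
  have IA: "IR_set V E A" "IR_set V E B" "IR_set V E C"
    using iA iB iC cA cB cC XI unfolding IR_set_def by auto
  have a1: "IR_adj V E X A"
    by (rule adjI[OF XI IA(1) uX _ U(3)]) (auto simp: A_def)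
  have a2: "IR_adj V E A B"
    by (rule adjI[OF IA(1) IA(2) _ _ W(3)]) (use vX uv in \<open>auto simp: A_def B_def\<close>)
  have a3: "IR_adj V E B C"
    by (rule adjI[OF IA(2) IA(3) _ _ U(4) C_eq]) (auto simp: A_def B_def C_def uX uv u'v)
  have a4: "IR_adj V E C X"
    by (rule adjI[OF IA(3) XI _ vX W(4) X_eq]) (auto simp: C_def)
  have m: "u' \<in> A" "u' \<in> B" "u' \<notin> C" "u' \<notin> X" "v' \<in> B" "v' \<in> C" "v' \<notin> A" "v' \<notin> X"
    "u \<in> C" "u \<notin> A"
    unfolding A_def B_def C_def using U(1) W(1) uv' uX vX uv u'v by auto
  have n1: "\<not> IR_adj V E X B"
  proof
    assume "IR_adj V E X B"
    then obtain a b where Beq: "B = (X - {a}) \<union> {b}" unfolding IR_adj_def by blast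
    have "u' = b" using m(2,4) Beq by blast
    moreover have "v' = b" using m(5,8) Beq by blast
    ultimately show False using uv' by simp
  qed
  have n2: "\<not> IR_adj V E A C"
  proof
    assume "IR_adj V E A C"
    then obtain a b where Ceq: "C = (A - {a}) \<union> {b}" unfolding IR_adj_def by blast
    have "u = b" using m(9,10) Ceq by blast
    moreover have "v' = b" using m(6,7) Ceq by blast
    ultimately show False using v'u by simp
  qed
  have d1: "X \<noteq> A" using m(1,4) by blast
  have d2: "X \<noteq> B" using m(2,4) by blast
  have d3: "X \<noteq> C" using m(6,8) by blast
  have d4: "A \<noteq> B" using m(5,7) by blast
  have d5: "A \<noteq> C" using m(1,3) by blast
  have d6: "B \<noteq> C" using m(2,3) by blast
  have d: "distinct [X, A, B, C]"
    unfolding distinct.simps list.set insert_iff empty_iff de_Morgan_disj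
    by (intro conjI d1 d2 d3 d4 d5 d6 notI TrueI) auto
  show ?thesis unfolding on_induced_C4_IR_def
    by (rule exI[of _ A], rule exI[of _ B], rule exI[of _ C]) (intro conjI d a1 a2 a3 a4 n1 n2)
qed

theorem corollary4p3:
  fixes V :: "'a set" and E :: "'a \<Rightarrow> 'a \<Rightarrow> bool" and X :: "'a set"
  assumes "simple_graph V E"
    and "IR_graph_connected V E"
    and "IR_set V E X"
    and "card (induced_edges E X) = 1 \<or>
         (independent E X \<and> (\<exists>u\<in>X. \<exists>v\<in>X. u \<noteq> v \<and> EPN V E u X \<noteq> {} \<and> EPN V E v X \<noteq> {}))"
  shows "on_induced_C4_IR V E X"
  using assms(4)
proof
  assume "card (induced_edges E X) = 1"
  then obtain e where e: "induced_edges E X = {e}" by (metis One_nat_def card_1_singletonE)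
  have "e \<in> induced_edges E X" using e by simp
  then obtain x y where xy: "x \<in> X" "y \<in> X" "E x y" "e = {x, y}"
    unfolding induced_edges_def by blast
  have hyp: "(w = x \<and> z = y) \<or> (w = y \<and> z = x)" if "w \<in> X" "z \<in> X" "E w z" for w z
  proof -
    have "{w, z} \<in> induced_edges E X" unfolding induced_edges_def using that by blast
    then have "{w, z} = {x, y}" using e xy(4) by simp
    then show ?thesis by (simp add: doubleton_eq_iff)
  qed
  have sym: "E y x" and ne: "x \<noteq> y" using assms(1) xy(3) unfolding simple_graph_def by metis+
  have irrX: "irredundant V E X" using assms(3) unfolding IR_set_def by blast
  have p1: "PN V E x X \<noteq> {}" using irrX xy(1) unfolding irredundant_def by blast
  have p2: "PN V E y X \<noteq> {}" using irrX xy(2) unfolding irredundant_def by blast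
  have q1: "PN V E x X \<inter> X = {}" using pn_in_X_empty[OF assms(1) xy(1,2,3)] .
  have q2: "PN V E y X \<inter> X = {}" using pn_in_X_empty[OF assms(1) xy(2,1) sym] .
  obtain x' where x': "x' \<in> PN V E x X" using p1 by blast
  obtain y' where y': "y' \<in> PN V E y X" using p2 by blast
  have x'': "x' \<in> EPN V E x X" unfolding EPN_def using x' q1 by blast
  have y'': "y' \<in> EPN V E y X" unfolding EPN_def using y' q2 by blast
  show ?thesis by (rule main[OF assms(1,3) xy(1,2) ne x'' y'' hyp])
next
  assume "independent E X \<and> (\<exists>u\<in>X. \<exists>v\<in>X. u \<noteq> v \<and> EPN V E u X \<noteq> {} \<and> EPN V E v X \<noteq> {})"
  then obtain u v where ind: "independent E X" and uv: "u \<in> X" "v \<in> X" "u \<noteq> v"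
    "EPN V E u X \<noteq> {}" "EPN V E v X \<noteq> {}" by blast
  obtain u' where u': "u' \<in> EPN V E u X" using uv(4) by blast
  obtain v' where v': "v' \<in> EPN V E v X" using uv(5) by blast
  have hyp: "(w = u \<and> z = v) \<or> (w = v \<and> z = u)" if "w \<in> X" "z \<in> X" "E w z" for w z
    using ind that unfolding independent_def by blast
  show ?thesis by (rule main[OF assms(1,3) uv(1,2,3) u' v' hyp])
qed

end
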